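(* Let $G$ be a graph with vertex set $\{v_1,\dots,v_n\}$ and let $k\ge 2$ be an integer. Construct a graph $G'$ as follows. Its vertices are the "$v$-type" vertices $v_{i,j}$ for $1\le i\le n$, $1\le j\le k$, and the "$u$-type" vertices $u_{i,j}$ for $1\le i,j\le k$, $i\ne j$. For any vertex $x_{i,j}$ (of either type), $i$ is its row number and $j$ its column number. The edges of $G'$ are: (1) column edges: every two distinct vertices (of any types) with the same column number are adjacent; (2) row edges: every two distinct $v$-type vertices with the same row number are adjacent; (3) diagonal edges: $u_{i,j}$ and $u_{i',j'}$ are adjacent whenever $i\neq i'$ and $j\ne j'$; (4) cross edges: $u_{a,b}$ and $v_{c,d}$ are adjacent if and only if $a=d$; (5) $G$-edges: $v_{i,j}$ and $v_{i',j'}$ are adjacent whenever $v_iv_{i'}\in E(G)$; and there are no other edges. Then: (a) $i(G')=k-1$; (b) $\mu_\alpha(G')\le 1$; (c) $\alpha(G)\ge k$ if and only if $\alpha(G')\ge k$; (d) $\alpha(G)\ge k$ if and only if $G'$ is not well-covered.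
   Context: All graphs are finite, simple and undirected. For a graph $G$, $\alpha(G)$ is the maximum size of an independent set and $i(G)$ is the minimum size of a maximal (with respect to inclusion) independent set; the independence gap is $\mu_\alpha(G)=\alpha(G)-i(G)$. A graph is well-covered if all its maximal independent sets have the same size. *)

theory Defs
  imports Main
begin

definition simple_graph :: "'a set \<Rightarrow> ('a \<Rightarrow> 'a \<Rightarrow> bool) \<Rightarrow> bool" where
  "simple_graph V E \<longleftrightarrow> finite V \<and> (\<forall>x y. E x y \<longrightarrow> E y x) \<and> (\<forall>x. \<not> E x x)
     \<and> (\<forall>x y. E x y \<longrightarrow> x \<in> V \<and> y \<in> V)"

definition indep_set :: "'a set \<Rightarrow> ('a \<Rightarrow> 'a \<Rightarrow> bool) \<Rightarrow> 'a set \<Rightarrow> bool" where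
  "indep_set V E S \<longleftrightarrow> S \<subseteq> V \<and> (\<forall>x\<in>S. \<forall>y\<in>S. x \<noteq> y \<longrightarrow> \<not> E x y)"

definition maximal_indep_set :: "'a set \<Rightarrow> ('a \<Rightarrow> 'a \<Rightarrow> bool) \<Rightarrow> 'a set \<Rightarrow> bool" where
  "maximal_indep_set V E S \<longleftrightarrow> indep_set V E S \<and> (\<forall>T. indep_set V E T \<and> S \<subseteq> T \<longrightarrow> T = S)"

definition indep_number :: "'a set \<Rightarrow> ('a \<Rightarrow> 'a \<Rightarrow> bool) \<Rightarrow> nat" where
  "indep_number V E = Max (card ` {S. indep_set V E S})"

definition indep_domination_number :: "'a set \<Rightarrow> ('a \<Rightarrow> 'a \<Rightarrow> bool) \<Rightarrow> nat" where
  "indep_domination_number V E = Min (card ` {S. maximal_indep_set V E S})"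

definition indep_gap :: "'a set \<Rightarrow> ('a \<Rightarrow> 'a \<Rightarrow> bool) \<Rightarrow> int" where
  "indep_gap V E = int (indep_number V E) - int (indep_domination_number V E)"

definition well_covered :: "'a set \<Rightarrow> ('a \<Rightarrow> 'a \<Rightarrow> bool) \<Rightarrow> bool" where
  "well_covered V E \<longleftrightarrow> (\<forall>S T. maximal_indep_set V E S \<and> maximal_indep_set V E T \<longrightarrow> card S = card T)"

(* vertices of the constructed graph G': v-type Vv x j (row x \<in> V(G), column j)
   and u-type Uv i j (row i, column j) *)
datatype 'a gvert = Vv 'a nat | Uv nat nat

definition constr_verts :: "'a set \<Rightarrow> nat \<Rightarrow> 'a gvert set" where
  "constr_verts V k = {Vv x j | x j. x \<in> V \<and> 1 \<le> j \<and> j \<le> k}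
     \<union> {Uv i j | i j. 1 \<le> i \<and> i \<le> k \<and> 1 \<le> j \<and> j \<le> k \<and> i \<noteq> j}"

definition constr_edge :: "('a \<Rightarrow> 'a \<Rightarrow> bool) \<Rightarrow> 'a gvert \<Rightarrow> 'a gvert \<Rightarrow> bool" where
  "constr_edge E x y = (x \<noteq> y \<and>
     (case x of
        Vv a j \<Rightarrow> (case y of
            Vv b j' \<Rightarrow> j = j' \<or> a = b \<or> E a b   \<comment> \<open>column, row, G-edges\<close>
          | Uv c d \<Rightarrow> d = j \<or> c = j)          \<comment> \<open>column, cross edges\<close>
      | Uv a b \<Rightarrow> (case y of
            Vv c d \<Rightarrow> b = d \<or> a = d          \<comment> \<open>column, cross edges\<close>
          | Uv c d \<Rightarrow> b = d \<or> (a \<noteq> c \<and> b \<noteq> d))))"  \<comment> \<open>column, diagonal edges\<close>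

end

theory Submission
  imports Defs
begin

fun col :: "'a gvert \<Rightarrow> nat" where
  "col (Vv a j) = j" | "col (Uv i j) = j"

fun rowv :: "'a gvert \<Rightarrow> 'a" where
  "rowv (Vv a j) = a" | "rowv (Uv i j) = undefined"

lemma fin_W: "finite V \<Longrightarrow> finite (constr_verts V k)"
proof -
  assume f: "finite V"
  have "constr_verts V k \<subseteq> (\<lambda>(x,j). Vv x j) ` (V \<times> {1..k}) \<union> (\<lambda>(i,j). Uv i j) ` ({1..k} \<times> {1..k})"
    by (auto simp: constr_verts_def)
  moreover have "finite ((\<lambda>(x,j). Vv x j) ` (V \<times> {1..k}) \<union> (\<lambda>(i,j). Uv i j) ` ({1..k} \<times> {1..k}))"
    using f by auto
  ultimately show ?thesis by (rule finite_subset)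
qed

lemma col_W: "x \<in> constr_verts V k \<Longrightarrow> col x \<in> {1..k}"
  by (auto simp: constr_verts_def)

lemma Uv_W: "Uv i j \<in> constr_verts V k \<longleftrightarrow> 1 \<le> i \<and> i \<le> k \<and> 1 \<le> j \<and> j \<le> k \<and> i \<noteq> j"
  by (auto simp: constr_verts_def)

lemma Vv_W: "Vv a j \<in> constr_verts V k \<longleftrightarrow> a \<in> V \<and> 1 \<le> j \<and> j \<le> k"
  by (auto simp: constr_verts_def)

lemma same_col: "x \<noteq> y \<Longrightarrow> col x = col y \<Longrightarrow> constr_edge E x y"
  by (cases x; cases y; auto simp: constr_edge_def)

lemma edge_sym: "(\<forall>x y. E x y \<longrightarrow> E y x) \<Longrightarrow> constr_edge E x y = constr_edge E y x"
  by (cases x; cases y; auto simp: constr_edge_def)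

lemma col_inj: "indep_set W (constr_edge E) S \<Longrightarrow> inj_on col S"
  unfolding inj_on_def indep_set_def using same_col by blast

lemma colS: "indep_set (constr_verts V k) (constr_edge E) S \<Longrightarrow> col ` S \<subseteq> {1..k}"
  unfolding indep_set_def using col_W by blast

lemma card_le:
  assumes "indep_set (constr_verts V k) (constr_edge E) S"
  shows "card S \<le> k"
proof -
  have "card S = card (col ` S)" using col_inj[OF assms] by (simp add: card_image)
  also have "\<dots> \<le> card {1..k}"
    by (rule card_mono) (use colS[OF assms] in auto)
  finally show ?thesis by simp
qed

lemma indep_noedge:
  "indep_set W F S \<Longrightarrow> x \<in> S \<Longrightarrow> y \<in> S \<Longrightarrow> x \<noteq> y \<Longrightarrow> \<not> F x y"
  unfolding indep_set_def by blast

lemma indep_sub: "indep_set W F S \<Longrightarrow> x \<in> S \<Longrightarrow> x \<in> W"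
  unfolding indep_set_def by blast

lemma L5:
  assumes "indep_set (constr_verts V k) (constr_edge E) S" "Uv i j \<in> S" "x \<in> S"
  shows "col x \<noteq> i"
proof
  assume c: "col x = i"
  have "Uv i j \<in> constr_verts V k" using indep_sub[OF assms(1,2)] .
  then have ij: "i \<noteq> j" by (simp add: Uv_W)
  have xW: "x \<in> constr_verts V k" using indep_sub[OF assms(1,3)] .
  show False
  proof (cases x)
    case (Vv a d)
    then have e: "constr_edge E (Uv i j) x" using c by (simp add: constr_edge_def)
    have "Uv i j \<noteq> x" using Vv by simp
    then show False using indep_noedge[OF assms(1,2,3)] e by blast
  next
    case (Uv c' d)
    then have "c' \<noteq> i" using c xW by (auto simp: Uv_W)
    then have e: "constr_edge E (Uv i j) x" using c Uv ij by (auto simp: constr_edge_def)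
    have "Uv i j \<noteq> x" using Uv \<open>c' \<noteq> i\<close> by simp
    then show False using indep_noedge[OF assms(1,2,3)] e by blast
  qed
qed

lemma card_le_Uv:
  assumes "indep_set (constr_verts V k) (constr_edge E) S" "Uv i j \<in> S"
  shows "card S \<le> k - 1"
proof -
  have i: "i \<in> {1..k}" using assms by (auto simp: indep_set_def Uv_W)
  have "card S = card (col ` S)" using col_inj[OF assms(1)] by (simp add: card_image)
  also have "\<dots> \<le> card ({1..k} - {i})"
    by (rule card_mono) (use colS[OF assms(1)] L5[OF assms] in auto)
  also have "\<dots> = k - 1" using i by simp
  finally show ?thesis .
qed

lemma Uv_same_row:
  assumes "indep_set (constr_verts V k) (constr_edge E) S" "Uv i j \<in> S" "Uv c d \<in> S"
  shows "c = i"
proof (rule ccontr)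
  assume "c \<noteq> i"
  then have "Uv i j \<noteq> Uv c d" by simp
  then have "constr_edge E (Uv i j) (Uv c d)" using \<open>c \<noteq> i\<close> by (auto simp: constr_edge_def)
  then show False using indep_noedge[OF assms(1,2,3)] \<open>Uv i j \<noteq> Uv c d\<close> by blast
qed

lemma max_ge:
  assumes sym: "\<forall>x y. E x y \<longrightarrow> E y x" and fV: "finite V"
    and m: "maximal_indep_set (constr_verts V k) (constr_edge E) S"
  shows "k - 1 \<le> card S"
proof -
  have ind: "indep_set (constr_verts V k) (constr_edge E) S" using m by (simp add: maximal_indep_set_def)
  have fS: "finite S" using ind fin_W[OF fV] by (auto simp: indep_set_def intro: finite_subset)
  have ins: False if "indep_set (constr_verts V k) (constr_edge E) (insert y S)" "y \<notin> S" for y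
    using m that unfolding maximal_indep_set_def by blast
  have indI: "indep_set (constr_verts V k) (constr_edge E) (insert y S)"
    if "y \<in> constr_verts V k" "\<And>z. z \<in> S \<Longrightarrow> \<not> constr_edge E y z" for y
    using ind that edge_sym[OF sym] unfolding indep_set_def by auto
  show ?thesis
  proof (cases "\<exists>i j. Uv i j \<in> S")
    case True
    then obtain i j where u: "Uv i j \<in> S" by blast
    have i: "i \<in> {1..k}" using ind u by (auto simp: indep_set_def Uv_W)
    have sub: "{1..k} - {i} \<subseteq> col ` S"
    proof
      fix c assume c: "c \<in> {1..k} - {i}"
      show "c \<in> col ` S"
      proof (rule ccontr)
        assume nc: "c \<notin> col ` S"
        have "Uv i c \<notin> S" using nc by force
        moreover have "indep_set (constr_verts V k) (constr_edge E) (insert (Uv i c) S)"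
        proof (rule indI)
          show "Uv i c \<in> constr_verts V k" using c i by (auto simp: Uv_W)
          fix z assume z: "z \<in> S"
          have "col z \<noteq> c" using z nc by force
          moreover have "col z \<noteq> i" using L5[OF ind u z] .
          ultimately show "\<not> constr_edge E (Uv i c) z"
          proof (cases z)
            case (Vv a d) then show ?thesis using \<open>col z \<noteq> c\<close> \<open>col z \<noteq> i\<close>
              by (auto simp: constr_edge_def)
          next
            case (Uv c' d')
            then have "c' = i" using Uv_same_row[OF ind u] z by simp
            then show ?thesis using Uv \<open>col z \<noteq> c\<close> by (auto simp: constr_edge_def)
          qed
        qed
        ultimately show False using ins by blast
      qed
    qed
    have "k - 1 = card ({1..k} - {i})" using i by simp
    also have "\<dots> \<le> card (col ` S)" using sub fS by (intro card_mono) auto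
    also have "\<dots> \<le> card S" using fS by (rule card_image_le)
    finally show ?thesis .
  next
    case False
    show ?thesis
    proof (rule ccontr)
      assume "\<not> k - 1 \<le> card S"
      then have lt: "card (col ` S) + 2 \<le> k" using card_image_le[OF fS, of col] by linarith
      have cs: "col ` S \<subseteq> {1..k}" using colS[OF ind] .
      have "card ({1..k} - col ` S) = k - card (col ` S)"
        using cs by (simp add: card_Diff_subset finite_subset)
      then have c2: "card ({1..k} - col ` S) \<ge> 2" using lt by simp
      have "card ({1..k} - col ` S) \<noteq> 0" using c2 by linarith
      then have "{1..k} - col ` S \<noteq> {}" by auto
      then obtain p where p: "p \<in> {1..k} - col ` S" by blast
      have "card ({1..k} - col ` S - {p}) \<ge> 1" using c2 p by simp
      then have "card ({1..k} - col ` S - {p}) \<noteq> 0" by linarith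
      then have "{1..k} - col ` S - {p} \<noteq> {}" by auto
      then obtain q where q: "q \<in> {1..k} - col ` S - {p}" by blast
      have "Uv p q \<notin> S" using False by blast
      moreover have "indep_set (constr_verts V k) (constr_edge E) (insert (Uv p q) S)"
      proof (rule indI)
        show "Uv p q \<in> constr_verts V k" using p q by (auto simp: Uv_W)
        fix z assume z: "z \<in> S"
        then obtain a d where zd: "z = Vv a d" using False by (cases z) auto
        have "d \<noteq> p" "d \<noteq> q" using p q z zd by force+
        then show "\<not> constr_edge E (Uv p q) z" using zd by (auto simp: constr_edge_def)
      qed
      ultimately show False using ins by blast
    qed
  qed
qed

lemma max_le: "maximal_indep_set (constr_verts V k) (constr_edge E) S \<Longrightarrow> card S \<le> k"
  using card_le by (auto simp: maximal_indep_set_def)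

lemma S0_max:
  assumes fV: "finite V" and k: "k \<ge> 2"
  shows "maximal_indep_set (constr_verts V k) (constr_edge E) ((\<lambda>j. Uv 1 j) ` {2..k})"
    (is "maximal_indep_set ?W ?F ?S0")
proof -
  have ind: "indep_set ?W ?F ?S0" unfolding indep_set_def
    by (auto simp: Uv_W constr_edge_def)
  have cS0: "card ?S0 = k - 1" by (simp add: card_image inj_on_def)
  show ?thesis unfolding maximal_indep_set_def
  proof (intro conjI ind allI impI)
    fix T assume T: "indep_set ?W ?F T \<and> ?S0 \<subseteq> T"
    have "Uv 1 2 \<in> T" using T k by auto
    then have "card T \<le> card ?S0" using card_le_Uv[of V k E T 1 2] T cS0 by simp
    moreover have fT: "finite T" using T fin_W[OF fV] by (auto simp: indep_set_def intro: finite_subset)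
    moreover have "card ?S0 \<le> card T" using fT T by (intro card_mono) auto
    ultimately have "card ?S0 = card T" by simp
    moreover have "?S0 \<subseteq> T" using T by blast
    ultimately show "T = ?S0" using card_subset_eq[OF fT, of ?S0] by simp
  qed
qed

lemma num_ge_iff:
  assumes "finite V"
  shows "k \<le> indep_number V E \<longleftrightarrow> (\<exists>S. indep_set V E S \<and> k \<le> card S)"
proof -
  have "finite {S. indep_set V E S}"
    by (rule finite_subset[of _ "Pow V"]) (use assms in \<open>auto simp: indep_set_def\<close>)
  moreover have "{} \<in> {S. indep_set V E S}" by (simp add: indep_set_def)
  ultimately show ?thesis unfolding indep_number_def
    by (subst Max_ge_iff) auto
qed

lemma num_le:
  assumes "finite V"
  shows "indep_number (constr_verts V k) (constr_edge E) \<le> k"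
proof -
  have "finite {S. indep_set (constr_verts V k) (constr_edge E) S}"
    by (rule finite_subset[of _ "Pow (constr_verts V k)"]) (use fin_W[OF assms] in \<open>auto simp: indep_set_def\<close>)
  moreover have "{} \<in> {S. indep_set (constr_verts V k) (constr_edge E) S}" by (simp add: indep_set_def)
  ultimately show ?thesis unfolding indep_number_def
    using card_le by (subst Max_le_iff) auto
qed

lemma G'_to_G:
  assumes "finite V" "k \<ge> 2" "indep_set (constr_verts V k) (constr_edge E) T" "k \<le> card T"
  shows "\<exists>S. indep_set V E S \<and> k \<le> card S"
proof -
  have noU: "Uv i j \<notin> T" for i j
  proof
    assume "Uv i j \<in> T"
    then have "card T \<le> k - 1" by (rule card_le_Uv[OF assms(3)])
    with assms(2,4) show False by linarith
  qed
  have inj: "inj_on rowv T"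
  proof (rule inj_onI)
    fix x y assume xy: "x \<in> T" "y \<in> T" "rowv x = rowv y"
    show "x = y"
    proof (rule ccontr)
      assume "x \<noteq> y"
      obtain a j where x: "x = Vv a j" using noU xy by (cases x) auto
      obtain b j' where y: "y = Vv b j'" using noU xy by (cases y) auto
      have "constr_edge E x y" using x y xy \<open>x \<noteq> y\<close> by (simp add: constr_edge_def)
      then show False using indep_noedge[OF assms(3) xy(1,2) \<open>x \<noteq> y\<close>] by blast
    qed
  qed
  have "indep_set V E (rowv ` T)" unfolding indep_set_def
  proof (intro conjI ballI impI)
    show "rowv ` T \<subseteq> V"
    proof
      fix a assume "a \<in> rowv ` T"
      then obtain x where x: "x \<in> T" "a = rowv x" by blast
      then obtain j where xv: "x = Vv a j" using noU by (cases x) auto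
      then have "Vv a j \<in> T" using x(1) by simp
      then have "Vv a j \<in> constr_verts V k" using indep_sub[OF assms(3)] by blast
      then show "a \<in> V" by (simp add: Vv_W)
    qed
  next
    fix a b assume ab: "a \<in> rowv ` T" "b \<in> rowv ` T" "a \<noteq> b"
    then obtain x y where x: "x \<in> T" "a = rowv x" and y: "y \<in> T" "b = rowv y" by blast
    obtain j where xx: "x = Vv a j" using noU x by (cases x) auto
    obtain j' where yy: "y = Vv b j'" using noU y by (cases y) auto
    show "\<not> E a b"
    proof
      assume "E a b"
      then have "constr_edge E x y" using xx yy ab by (simp add: constr_edge_def)
      moreover have "x \<noteq> y" using xx yy ab by simp
      ultimately show False using indep_noedge[OF assms(3) x(1) y(1)] by blast
    qed
  qed
  moreover have "card (rowv ` T) = card T" using inj by (simp add: card_image)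
  ultimately have "indep_set V E (rowv ` T) \<and> k \<le> card (rowv ` T)" using assms(4) by simp
  then show ?thesis by (rule exI)
qed

lemma G_to_G':
  assumes "indep_set V E S" "k \<le> card S" "finite V"
  shows "\<exists>T. indep_set (constr_verts V k) (constr_edge E) T \<and> card T = k"
proof -
  obtain S' where S': "S' \<subseteq> S" "card S' = k" "finite S'"
    using obtain_subset_with_card_n[OF assms(2)] by blast
  obtain f where f: "bij_betw f {1..card S'} S'" using ex_bij_betw_nat_finite_1[OF S'(3)] by blast
  then have f: "bij_betw f {1..k} S'" using S'(2) by simp
  have fim: "f ` {1..k} = S'" using f by (simp add: bij_betw_def)
  have finj: "inj_on f {1..k}" using f by (simp add: bij_betw_def)
  define T where "T = (\<lambda>j. Vv (f j) j) ` {1..k}"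
  have "card T = k" unfolding T_def by (subst card_image) (auto simp: inj_on_def)
  moreover have "indep_set (constr_verts V k) (constr_edge E) T" unfolding indep_set_def
  proof (intro conjI ballI impI)
    have "S' \<subseteq> V" using S'(1) assms(1) by (auto simp: indep_set_def)
    moreover note fim
    ultimately have "\<And>j. j \<in> {1..k} \<Longrightarrow> f j \<in> V" by blast
    then show "T \<subseteq> constr_verts V k" unfolding T_def by (auto simp: Vv_W)
  next
    fix x y assume xy: "x \<in> T" "y \<in> T" "x \<noteq> y"
    then obtain j j' where j: "j \<in> {1..k}" "j' \<in> {1..k}" "x = Vv (f j) j" "y = Vv (f j') j'"
      unfolding T_def by blast
    have jj: "j \<noteq> j'" using xy j by auto
    have fj: "f j \<noteq> f j'" using finj j(1,2) jj unfolding inj_on_def by blast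
    have "f j \<in> S" "f j' \<in> S" using fim j(1,2) S'(1) by blast+
    then have "\<not> E (f j) (f j')" using indep_noedge[OF assms(1)] fj by blast
    then show "\<not> constr_edge E x y" using j jj fj by (simp add: constr_edge_def)
  qed
  ultimately show ?thesis by blast
qed

theorem mainTheorem9:
  fixes V :: "'a set" and E :: "'a \<Rightarrow> 'a \<Rightarrow> bool" and k :: nat
  assumes "simple_graph V E" and "k \<ge> 2"
  shows "indep_domination_number (constr_verts V k) (constr_edge E) = k - 1
    \<and> indep_gap (constr_verts V k) (constr_edge E) \<le> 1
    \<and> (indep_number V E \<ge> k \<longleftrightarrow> indep_number (constr_verts V k) (constr_edge E) \<ge> k)
    \<and> (indep_number V E \<ge> k \<longleftrightarrow> \<not> well_covered (constr_verts V k) (constr_edge E))"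
proof -
  have fV: "finite V" and sym: "\<forall>x y. E x y \<longrightarrow> E y x"
    using assms(1) by (auto simp: simple_graph_def)
  let ?W = "constr_verts V k" and ?F = "constr_edge E"
  let ?S0 = "(\<lambda>j. Uv 1 j) ` {2..k} :: 'a gvert set"
  have S0: "maximal_indep_set ?W ?F ?S0" using S0_max[OF fV assms(2)] .
  have cS0: "card ?S0 = k - 1" by (simp add: card_image inj_on_def)
  have dom: "indep_domination_number ?W ?F = k - 1"
    unfolding indep_domination_number_def
  proof (rule Min_eqI)
    show "finite (card ` {S. maximal_indep_set ?W ?F S})"
      by (rule finite_imageI, rule finite_subset[of _ "Pow ?W"])
        (use fin_W[OF fV] in \<open>auto simp: maximal_indep_set_def indep_set_def\<close>)
    show "\<And>y. y \<in> card ` {S. maximal_indep_set ?W ?F S} \<Longrightarrow> k - 1 \<le> y"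
      using max_ge[OF sym fV] by auto
    show "k - 1 \<in> card ` {S. maximal_indep_set ?W ?F S}"
    proof -
      have "card ?S0 \<in> card ` {S. maximal_indep_set ?W ?F S}" using S0 by (intro imageI) simp
      then show ?thesis by (simp only: cS0)
    qed
  qed
  have gap: "indep_gap ?W ?F \<le> 1"
    using dom num_le[OF fV, of k E] unfolding indep_gap_def by simp
  have c: "indep_number V E \<ge> k \<longleftrightarrow> indep_number ?W ?F \<ge> k"
  proof
    assume "indep_number V E \<ge> k"
    then obtain S where "indep_set V E S" "k \<le> card S" using num_ge_iff[OF fV] by blast
    then obtain T where T: "indep_set ?W ?F T" "card T = k" using G_to_G'[OF _ _ fV] by blast
    then show "indep_number ?W ?F \<ge> k" using num_ge_iff[OF fin_W[OF fV]] by auto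
  next
    assume "indep_number ?W ?F \<ge> k"
    then obtain T where "indep_set ?W ?F T" "k \<le> card T" using num_ge_iff[OF fin_W[OF fV]] by blast
    then show "indep_number V E \<ge> k" using G'_to_G[OF fV assms(2)] num_ge_iff[OF fV] by blast
  qed
  have d: "indep_number V E \<ge> k \<longleftrightarrow> \<not> well_covered ?W ?F"
  proof
    assume "indep_number V E \<ge> k"
    then obtain S where "indep_set V E S" "k \<le> card S" using num_ge_iff[OF fV] by blast
    then obtain T where T: "indep_set ?W ?F T" "card T = k" using G_to_G'[OF _ _ fV] by blast
    have fT: "finite T" using T fin_W[OF fV] by (auto simp: indep_set_def intro: finite_subset)
    have "maximal_indep_set ?W ?F T" unfolding maximal_indep_set_def
    proof (intro conjI T(1) allI impI)
      fix U assume U: "indep_set ?W ?F U \<and> T \<subseteq> U"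
      have "finite U" using U fin_W[OF fV] by (auto simp: indep_set_def intro: finite_subset)
      moreover have "card U \<le> card T" using card_le[of V k E U] U T(2) by simp
      moreover have "card T \<le> card U" using \<open>finite U\<close> U by (intro card_mono) auto
      ultimately show "U = T" using U card_subset_eq[of U T] by simp
    qed
    moreover have "k - 1 \<noteq> k" using assms(2) by simp
    ultimately have "card T \<noteq> card ?S0" using cS0 T(2) by simp
    then show "\<not> well_covered ?W ?F" using S0 \<open>maximal_indep_set ?W ?F T\<close>
      unfolding well_covered_def by blast
  next
    assume "\<not> well_covered ?W ?F"
    then obtain S T where ST: "maximal_indep_set ?W ?F S" "maximal_indep_set ?W ?F T" "card S \<noteq> card T"
      unfolding well_covered_def by blast
    have "k - 1 \<le> card S" "k - 1 \<le> card T" "card S \<le> k" "card T \<le> k"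
      using max_ge[OF sym fV] max_le ST by auto
    then have "card S = k \<or> card T = k" using ST(3) by linarith
    then have "\<exists>U. maximal_indep_set ?W ?F U \<and> card U = k" using ST by blast
    then have "indep_number ?W ?F \<ge> k" using num_ge_iff[OF fin_W[OF fV]]
      by (auto simp: maximal_indep_set_def)
    then show "indep_number V E \<ge> k" using c by simp
  qed
  show ?thesis using dom gap c d by blast
qed

end
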